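(* Let $T$ be a PQ-tree with leaf set $E$, let $\vartriangleleft$ be a binary relation on $E$, and let $S$ be a subtree of $T$ with leaf set $E_S$. Suppose $T$ has a reordering compatible with $\vartriangleleft$. Let $S'$ be any reordering of $S$ (obtained by reordering operations applied only at inner nodes of $S$) such that for all $a,b\in E_S$, $a\vartriangleleft b$ implies $a<_{S'} b$. Then there exists a reordering $T'$ of $T$ compatible with $\vartriangleleft$ such that, for every inner node of $S$, the order of its children in $T'$ coincides with that in $S'$.
   Context: A PQ-tree on a finite set $E$ is a rooted tree whose leaves are in one-to-one correspondence with the elements of $E$, whose inner nodes are each either a P-node or a Q-node, each inner node has at least two children, and for each inner node a linear order of its children is fixed. $<_T$ denotes the linear ordering of $E$ obtained by reading the leaves of $T$ from left to right. The allowed reordering operations are: permuting the children of a P-node arbitrarily, and reversing the order of the children of a Q-node. A tree $T'$ is a reordering of $T$ if it is obtained from $T$ by finitely many such operations. A subtree consists of one inner node and all its descendants; it is itself a PQ-tree and $<_S$ is defined likewise. A reordering $T'$ is compatible with a relation $\vartriangleleft$ on $E$ if $a\vartriangleleft b$ implies $a<_{T'} b$ for all $a,b\in E$. *)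

theory Defs
  imports Main "HOL-Library.Multiset"
begin

datatype 'a pqtree = Leaf 'a | PNode "'a pqtree list" | QNode "'a pqtree list"

fun frontier :: "'a pqtree \<Rightarrow> 'a list" where
  "frontier (Leaf a) = [a]"
| "frontier (PNode cs) = concat (map frontier cs)"
| "frontier (QNode cs) = concat (map frontier cs)"

definition leaves :: "'a pqtree \<Rightarrow> 'a set" where
  "leaves T = set (frontier T)"

fun inner_ok :: "'a pqtree \<Rightarrow> bool" where
  "inner_ok (Leaf a) = True"
| "inner_ok (PNode cs) = (2 \<le> length cs \<and> (\<forall>c\<in>set cs. inner_ok c))"
| "inner_ok (QNode cs) = (2 \<le> length cs \<and> (\<forall>c\<in>set cs. inner_ok c))"

definition pq_tree :: "'a pqtree \<Rightarrow> bool" where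
  "pq_tree T \<longleftrightarrow> distinct (frontier T) \<and> inner_ok T"

fun is_inner :: "'a pqtree \<Rightarrow> bool" where
  "is_inner (Leaf a) = False"
| "is_inner _ = True"

definition less_in :: "'a pqtree \<Rightarrow> 'a \<Rightarrow> 'a \<Rightarrow> bool" where
  "less_in T a b \<longleftrightarrow> (\<exists>i j. i < j \<and> j < length (frontier T) \<and>
                         frontier T ! i = a \<and> frontier T ! j = b)"

inductive reorder_step :: "'a pqtree \<Rightarrow> 'a pqtree \<Rightarrow> bool" where
  perm_P: "mset cs' = mset cs \<Longrightarrow> reorder_step (PNode cs) (PNode cs')"
| rev_Q: "reorder_step (QNode cs) (QNode (rev cs))"
| in_P: "reorder_step c c' \<Longrightarrow> reorder_step (PNode (xs @ c # ys)) (PNode (xs @ c' # ys))"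
| in_Q: "reorder_step c c' \<Longrightarrow> reorder_step (QNode (xs @ c # ys)) (QNode (xs @ c' # ys))"

definition reordering :: "'a pqtree \<Rightarrow> 'a pqtree \<Rightarrow> bool" where
  "reordering T T' \<longleftrightarrow> rtranclp reorder_step T T'"

inductive subtree :: "'a pqtree \<Rightarrow> 'a pqtree \<Rightarrow> bool" where
  self: "is_inner S \<Longrightarrow> subtree S S"
| below_P: "subtree S c \<Longrightarrow> c \<in> set cs \<Longrightarrow> subtree S (PNode cs)"
| below_Q: "subtree S c \<Longrightarrow> c \<in> set cs \<Longrightarrow> subtree S (QNode cs)"

definition compatible :: "'a pqtree \<Rightarrow> ('a \<Rightarrow> 'a \<Rightarrow> bool) \<Rightarrow> bool" where
  "compatible T' R \<longleftrightarrow> (\<forall>a b. R a b \<longrightarrow> less_in T' a b)"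

end

theory Submission
  imports Defs
begin

inductive replace :: "'a pqtree \<Rightarrow> 'a pqtree \<Rightarrow> 'a pqtree \<Rightarrow> 'a pqtree \<Rightarrow> bool" where
  here: "replace A B A B"
| inP: "replace A B c c' \<Longrightarrow> replace A B (PNode (xs @ c # ys)) (PNode (xs @ c' # ys))"
| inQ: "replace A B c c' \<Longrightarrow> replace A B (QNode (xs @ c # ys)) (QNode (xs @ c' # ys))"

lemma replace_frontier:
  "replace A B T T' \<Longrightarrow> \<exists>P Q. frontier T = P @ frontier A @ Q \<and> frontier T' = P @ frontier B @ Q"
proof (induction rule: replace.induct)
  case here then show ?case by (metis append_Nil append_Nil2)
next
  case (inP A B c c' xs ys)
  then obtain P Q where "frontier c = P @ frontier A @ Q" "frontier c' = P @ frontier B @ Q" by blast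
  then show ?case
    by (rule_tac x="concat (map frontier xs) @ P" in exI,
        rule_tac x="Q @ concat (map frontier ys)" in exI) simp
next
  case (inQ A B c c' xs ys)
  then obtain P Q where "frontier c = P @ frontier A @ Q" "frontier c' = P @ frontier B @ Q" by blast
  then show ?case
    by (rule_tac x="concat (map frontier xs) @ P" in exI,
        rule_tac x="Q @ concat (map frontier ys)" in exI) simp
qed

lemma reordering_inP: "reordering c c' \<Longrightarrow> reordering (PNode (xs @ c # ys)) (PNode (xs @ c' # ys))"
  unfolding reordering_def
proof (induction rule: rtranclp_induct)
  case base then show ?case by simp
next
  case (step y z) show ?case by (rule rtranclp.rtrancl_into_rtrancl[OF step.IH reorder_step.in_P[OF step.hyps(2)]])
qed

lemma reordering_inQ: "reordering c c' \<Longrightarrow> reordering (QNode (xs @ c # ys)) (QNode (xs @ c' # ys))"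
  unfolding reordering_def
proof (induction rule: rtranclp_induct)
  case base then show ?case by simp
next
  case (step y z) show ?case by (rule rtranclp.rtrancl_into_rtrancl[OF step.IH reorder_step.in_Q[OF step.hyps(2)]])
qed

lemma replace_reordering: "replace A B T T' \<Longrightarrow> reordering A B \<Longrightarrow> reordering T T'"
  by (induction rule: replace.induct) (auto intro: reordering_inP reordering_inQ)

lemma replace_subtree: "replace A B T T' \<Longrightarrow> is_inner B \<Longrightarrow> subtree B T'"
proof (induction rule: replace.induct)
  case (here A B) then show ?case by (rule subtree.self)
next
  case (inP A B c c' xs ys) then show ?case by (intro subtree.below_P[of B c']) simp_all
next
  case (inQ A B c c' xs ys) then show ?case by (intro subtree.below_Q[of B c']) simp_all
qed

lemma subtree_replace: "subtree S T \<Longrightarrow> \<exists>T'. replace S B T T'"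
proof (induction rule: subtree.induct)
  case (self S) then show ?case by (blast intro: replace.here)
next
  case (below_P S c cs)
  then obtain c' where c': "replace S B c c'" by blast
  obtain xs ys where cs: "cs = xs @ c # ys" using below_P(2) by (meson split_list)
  show ?case unfolding cs by (rule exI, rule replace.inP[OF c'])
next
  case (below_Q S c cs)
  then obtain c' where c': "replace S B c c'" by blast
  obtain xs ys where cs: "cs = xs @ c # ys" using below_Q(2) by (meson split_list)
  show ?case unfolding cs by (rule exI, rule replace.inQ[OF c'])
qed

lemma subtree_inner: "subtree S T \<Longrightarrow> is_inner S"
  by (induction rule: subtree.induct) auto

lemma step_inner: "reorder_step A B \<Longrightarrow> is_inner A \<Longrightarrow> is_inner B"
  by (induction rule: reorder_step.induct) auto

lemma reordering_inner: "reordering A B \<Longrightarrow> is_inner A \<Longrightarrow> is_inner B"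
  unfolding reordering_def by (induction rule: rtranclp_induct) (auto dest: step_inner)

lemma step_sym: "reorder_step A B \<Longrightarrow> reorder_step B A"
proof (induction rule: reorder_step.induct)
  case (perm_P cs' cs) then show ?case by (metis reorder_step.perm_P)
next
  case (rev_Q cs) then show ?case using reorder_step.rev_Q[of "rev cs"] by simp
next
  case (in_P c c' xs ys) from in_P.IH show ?case by (rule reorder_step.in_P)
next
  case (in_Q c c' xs ys) from in_Q.IH show ?case by (rule reorder_step.in_Q)
qed

lemma reordering_sym: "reordering A B \<Longrightarrow> reordering B A"
  unfolding reordering_def
proof (induction rule: rtranclp_induct)
  case base then show ?case by simp
next
  case (step y z) then show ?case by (meson step_sym converse_rtranclp_into_rtranclp)
qed

lemma reordering_trans: "reordering A B \<Longrightarrow> reordering B C \<Longrightarrow> reordering A C"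
  unfolding reordering_def by (rule rtranclp_trans)

lemma mset_concat_map: "mset cs = mset cs' \<Longrightarrow>
   mset (concat (map frontier cs)) = mset (concat (map frontier cs'))"
proof -
  assume a: "mset cs = mset cs'"
  have eq: "\<And>xs. mset (concat (map frontier xs)) = sum_mset (image_mset (mset \<circ> frontier) (mset xs))"
    subgoal for xs by (induction xs) auto
    done
  show ?thesis by (simp only: eq a)
qed

lemma step_mset: "reorder_step A B \<Longrightarrow> mset (frontier B) = mset (frontier A)"
proof (induction rule: reorder_step.induct)
  case (perm_P cs' cs) show ?case using mset_concat_map[OF perm_P] by simp
next
  case (rev_Q cs) show ?case using mset_concat_map[of "rev cs" cs] by simp
qed auto

lemma reordering_mset: "reordering A B \<Longrightarrow> mset (frontier B) = mset (frontier A)"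
  unfolding reordering_def by (induction rule: rtranclp_induct) (auto dest: step_mset)

lemma step_subtree: "reorder_step T T1 \<Longrightarrow> subtree S T \<Longrightarrow> \<exists>S1. subtree S1 T1 \<and> reordering S S1"
proof (induction arbitrary: S rule: reorder_step.induct)
  case (perm_P cs' cs)
  from perm_P(2) show ?case
  proof (cases rule: subtree.cases)
    case self then show ?thesis using perm_P(1)
      by (metis is_inner.simps(2) reorder_step.perm_P reordering_def r_into_rtranclp subtree.self)
  next
    case (below_P c) then show ?thesis using perm_P(1)
      by (metis reordering_def rtranclp.rtrancl_refl set_mset_mset subtree.below_P)
  qed
next
  case (rev_Q cs)
  from rev_Q show ?case
  proof (cases rule: subtree.cases)
    case self then show ?thesis
      by (metis is_inner.simps(3) reorder_step.rev_Q reordering_def r_into_rtranclp subtree.self)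
  next
    case (below_Q c) then show ?thesis
      by (metis reordering_def rtranclp.rtrancl_refl set_rev subtree.below_Q)
  qed
next
  case (in_P c c' xs ys)
  from in_P(3) show ?case
  proof (cases rule: subtree.cases)
    case self then show ?thesis using in_P(1)
      by (metis is_inner.simps(2) reorder_step.in_P reordering_def r_into_rtranclp subtree.self)
  next
    case (below_P d)
    show ?thesis
    proof (cases "d = c")
      case True then show ?thesis using in_P(2) below_P
        by (metis in_set_conv_decomp subtree.below_P)
    next
      case False
      then have "d \<in> set (xs @ c' # ys)" using below_P by auto
      then show ?thesis using below_P
        by (metis reordering_def rtranclp.rtrancl_refl subtree.below_P)
    qed
  qed
next
  case (in_Q c c' xs ys)
  from in_Q(3) show ?case
  proof (cases rule: subtree.cases)
    case self then show ?thesis using in_Q(1)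
      by (metis is_inner.simps(3) reorder_step.in_Q reordering_def r_into_rtranclp subtree.self)
  next
    case (below_Q d)
    show ?thesis
    proof (cases "d = c")
      case True then show ?thesis using in_Q(2) below_Q
        by (metis in_set_conv_decomp subtree.below_Q)
    next
      case False
      then have "d \<in> set (xs @ c' # ys)" using below_Q by auto
      then show ?thesis using below_Q
        by (metis reordering_def rtranclp.rtrancl_refl subtree.below_Q)
    qed
  qed
qed

lemma reordering_subtree: "reordering T T1 \<Longrightarrow> subtree S T \<Longrightarrow> \<exists>S1. subtree S1 T1 \<and> reordering S S1"
  unfolding reordering_def
proof (induction rule: rtranclp_induct)
  case base then show ?case by auto
next
  case (step y z)
  then obtain S1 where "subtree S1 y" "rtranclp reorder_step S S1" by auto
  then show ?case using step_subtree[OF step(2)] unfolding reordering_def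
    by (meson rtranclp_trans)
qed

lemma nth3: "(P @ F @ Q) ! k = (if k < length P then P ! k else if k < length P + length F
   then F ! (k - length P) else Q ! (k - length P - length F))"
  by (auto simp: nth_append)

lemma list_compat:
  fixes P F0 F' Q :: "'a list"
  assumes d: "distinct (P @ F0 @ Q)" and m: "mset F' = mset F0"
    and l: "i < j" "j < length (P @ F0 @ Q)" "(P @ F0 @ Q) ! i = a" "(P @ F0 @ Q) ! j = b"
    and h: "a \<in> set F0 \<Longrightarrow> b \<in> set F0 \<Longrightarrow>
             (\<exists>i j. i < j \<and> j < length F' \<and> F' ! i = a \<and> F' ! j = b)"
  shows "\<exists>i j. i < j \<and> j < length (P @ F' @ Q) \<and> (P @ F' @ Q) ! i = a \<and> (P @ F' @ Q) ! j = b"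
proof -
  have len: "length F' = length F0" using m by (metis size_mset)
  have sF: "set F' = set F0" using m by (metis set_mset_mset)
  have dj: "set P \<inter> set F0 = {}" "set Q \<inter> set F0 = {}" using d by auto
  define n where "n = length P"
  define k where "k = length F0"
  have mid0: "\<And>t. n \<le> t \<Longrightarrow> t < n + k \<Longrightarrow> (P @ F0 @ Q) ! t \<in> set F0"
    by (simp add: nth3 n_def k_def)
  have out0: "\<And>t. t < length (P @ F0 @ Q) \<Longrightarrow> (P @ F0 @ Q) ! t \<in> set F0 \<Longrightarrow> n \<le> t \<and> t < n + k"
  proof -
    fix t assume t: "t < length (P @ F0 @ Q)" "(P @ F0 @ Q) ! t \<in> set F0"
    show "n \<le> t \<and> t < n + k"
    proof (rule ccontr)
      assume "\<not> (n \<le> t \<and> t < n + k)"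
      then have "t < n \<or> n + k \<le> t" by auto
      then show False
      proof
        assume "t < n" then have "(P @ F0 @ Q) ! t \<in> set P" by (simp add: nth3 n_def)
        then show False using t dj by auto
      next
        assume "n + k \<le> t" then have "(P @ F0 @ Q) ! t \<in> set Q" using t
          by (simp add: nth3 n_def k_def)
        then show False using t dj by auto
      qed
    qed
  qed
  have same: "\<And>t. t < length (P @ F0 @ Q) \<Longrightarrow> \<not> (n \<le> t \<and> t < n + k) \<Longrightarrow>
      (P @ F' @ Q) ! t = (P @ F0 @ Q) ! t"
    by (auto simp: nth3 n_def k_def len)
  have lens: "length (P @ F' @ Q) = length (P @ F0 @ Q)" using len by simp
  show ?thesis
  proof (cases "a \<in> set F0")
    case aT: True
    show ?thesis
    proof (cases "b \<in> set F0")
      case True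
      then obtain i' j' where "i' < j'" "j' < length F'" "F' ! i' = a" "F' ! j' = b"
        using h aT by blast
      then show ?thesis
        by (rule_tac x="n + i'" in exI, rule_tac x="n + j'" in exI) (auto simp: nth_append n_def)
    next
      case False
      have "n \<le> i" using out0[of i] l aT by auto
      have "\<not> (n \<le> j \<and> j < n + k)" using mid0[of j] l False by auto
      then have jj: "n + k \<le> j" using \<open>n \<le> i\<close> l by auto
      obtain i' where "i' < length F'" "F' ! i' = a" using aT sF by (metis in_set_conv_nth)
      then show ?thesis using jj same[of j] l lens len
        by (rule_tac x="n + i'" in exI, rule_tac x="j" in exI) (auto simp: nth_append n_def k_def)
    qed
  next
    case aF: False
    have ia: "\<not> (n \<le> i \<and> i < n + k)" using mid0[of i] l aF by auto
    show ?thesis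
    proof (cases "b \<in> set F0")
      case True
      have "j < n + k" using out0[of j] l True by auto
      then have ii: "i < n" using ia l by auto
      obtain j' where "j' < length F'" "F' ! j' = b" using True sF by (metis in_set_conv_nth)
      then show ?thesis using ii same[of i] l lens len
        by (rule_tac x="i" in exI, rule_tac x="n + j'" in exI) (auto simp: nth_append n_def k_def)
    next
      case False
      have "\<not> (n \<le> j \<and> j < n + k)" using mid0[of j] l False by auto
      then show ?thesis using ia same[of i] same[of j] l lens
        by (rule_tac x="i" in exI, rule_tac x="j" in exI) simp
    qed
  qed
qed

theorem mainTheorem2:
  fixes T S S' :: "'a pqtree" and R :: "'a \<Rightarrow> 'a \<Rightarrow> bool"
  assumes "pq_tree T"
    and "\<forall>a b. R a b \<longrightarrow> a \<in> leaves T \<and> b \<in> leaves T"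
    and "subtree S T"
    and "\<exists>T0. reordering T T0 \<and> compatible T0 R"
    and "reordering S S'"
    and "\<forall>a\<in>leaves S. \<forall>b\<in>leaves S. R a b \<longrightarrow> less_in S' a b"
  shows "\<exists>T'. reordering T T' \<and> compatible T' R \<and> subtree S' T'"
proof -
  obtain T0 where T0: "reordering T T0" "compatible T0 R" using assms(4) by blast
  obtain S0 where S0: "subtree S0 T0" "reordering S S0" using reordering_subtree[OF T0(1) assms(3)] by blast
  obtain T' where T': "replace S0 S' T0 T'" using subtree_replace[OF S0(1)] by blast
  have r0: "reordering S0 S'" using reordering_sym[OF S0(2)] assms(5) by (rule reordering_trans)
  have inner: "is_inner S'" using reordering_inner[OF assms(5) subtree_inner[OF assms(3)]] .
  obtain P Q where PQ: "frontier T0 = P @ frontier S0 @ Q" "frontier T' = P @ frontier S' @ Q"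
    using replace_frontier[OF T'] by blast
  have dT0: "distinct (frontier T0)" using assms(1) reordering_mset[OF T0(1)] unfolding pq_tree_def
    by (metis mset_eq_imp_distinct_iff)
  have mS: "mset (frontier S') = mset (frontier S0)"
    using reordering_mset[OF assms(5)] reordering_mset[OF S0(2)] by simp
  have setS: "set (frontier S0) = leaves S" unfolding leaves_def
    using reordering_mset[OF S0(2)] by (metis set_mset_mset)
  have "compatible T' R" unfolding compatible_def
  proof (intro allI impI)
    fix a b assume "R a b"
    then have "less_in T0 a b" using T0(2) unfolding compatible_def by blast
    then obtain i j where ij: "i < j" "j < length (frontier T0)" "frontier T0 ! i = a" "frontier T0 ! j = b"
      unfolding less_in_def by blast
    have "\<exists>i j. i < j \<and> j < length (P @ frontier S' @ Q) \<and> (P @ frontier S' @ Q) ! i = a \<and> (P @ frontier S' @ Q) ! j = b"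
      apply (rule list_compat[of P "frontier S0" Q "frontier S'" i j])
      using dT0 PQ mS ij apply auto[6]
      using assms(6) \<open>R a b\<close> setS unfolding less_in_def by auto
    then show "less_in T' a b" unfolding less_in_def PQ .
  qed
  moreover have "reordering T T'" using T0(1) replace_reordering[OF T' r0] by (rule reordering_trans)
  ultimately show ?thesis using replace_subtree[OF T' inner] by blast
qed

end
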